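(* Let $f$ be a transcendental entire function with a bounded invariant Siegel disk $\Delta$ of rotation number $\theta$, and suppose $S(f)\cap\hat{\Delta}=\emptyset$. If furthermore $f$ satisfies the Separation Property and has no wandering domains, then $\Delta$ has no hidden components.
   Context: $S(f)$ is the set of singular values of $f$ (points $s$ such that for no neighborhood of $s$ are all branches of $f^{-1}$ well defined and univalent). An invariant Siegel disk is a Fatou component $\Delta$ with $f(\Delta)=\Delta$ on which $f$ is conformally conjugate to an irrational rotation $z\mapsto e^{2\pi i\theta}z$. $\hat{\Delta}$ is the complement of the unique unbounded component of $\mathbb{C}\setminus\overline{\Delta}$. The hidden components of $\Delta$ are the bounded components of $\mathbb{C}\setminus\overline{\Delta}$. A wandering domain is a Fatou component $U$ with $f^n(U)\ne f^m(U)$ for all $n\ne m$. $f$ satisfies the Separation Property if the closures of any two distinct periodic Fatou components of $f$ intersect in at most one point. *)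

theory Defs
  imports "HOL-Complex_Analysis.Complex_Analysis"
begin

definition transcendental_entire :: "(complex \<Rightarrow> complex) \<Rightarrow> bool" where
  "transcendental_entire f \<longleftrightarrow> f holomorphic_on UNIV \<and> \<not> (\<exists>p. \<forall>z. f z = poly p z)"

definition normal_family :: "(complex \<Rightarrow> complex) set \<Rightarrow> complex set \<Rightarrow> bool" where
  "normal_family F U \<longleftrightarrow>
     (\<forall>g :: nat \<Rightarrow> complex \<Rightarrow> complex. (\<forall>n. g n \<in> F) \<longrightarrow>
        (\<exists>r. strict_mono r \<and>
           ((\<exists>h. \<forall>K. compact K \<and> K \<subseteq> U \<longrightarrow> uniform_limit K (\<lambda>n. g (r n)) h sequentially)
            \<or> (\<forall>K. compact K \<and> K \<subseteq> U \<longrightarrow>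
                 (\<forall>B. eventually (\<lambda>n. \<forall>z\<in>K. B \<le> norm (g (r n) z)) sequentially)))))"

definition fatou_set :: "(complex \<Rightarrow> complex) \<Rightarrow> complex set" where
  "fatou_set f = {z. \<exists>U. open U \<and> z \<in> U \<and> normal_family (range (\<lambda>n. f ^^ n)) U}"

definition fatou_component :: "(complex \<Rightarrow> complex) \<Rightarrow> complex set \<Rightarrow> bool" where
  "fatou_component f U \<longleftrightarrow> U \<in> components (fatou_set f)"

text \<open>Singular values: s is not singular iff some open neighbourhood V of s is such that
  every branch of the inverse is well defined and univalent on V, i.e. f maps each
  connected component of the preimage of V bijectively onto V.\<close>
definition singular_values :: "(complex \<Rightarrow> complex) \<Rightarrow> complex set" where
  "singular_values f = {s. \<not> (\<exists>V. open V \<and> s \<in> V \<and>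
      (\<forall>W \<in> components (f -` V). inj_on f W \<and> f ` W = V))}"

definition invariant_siegel_disk :: "(complex \<Rightarrow> complex) \<Rightarrow> complex set \<Rightarrow> real \<Rightarrow> bool" where
  "invariant_siegel_disk f D \<theta> \<longleftrightarrow> fatou_component f D \<and> f ` D = D \<and> \<theta> \<notin> \<rat> \<and>
     (\<exists>\<phi>. \<phi> holomorphic_on D \<and> inj_on \<phi> D \<and> \<phi> ` D = ball 0 1 \<and>
        (\<forall>z\<in>D. \<phi> (f z) = exp (2 * pi * \<i> * complex_of_real \<theta>) * \<phi> z))"

definition filled :: "complex set \<Rightarrow> complex set" where
  "filled D = - \<Union>{C \<in> components (- closure D). \<not> bounded C}"

definition hidden_components :: "complex set \<Rightarrow> complex set set" where
  "hidden_components D = {C \<in> components (- closure D). bounded C}"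

definition wandering_domain :: "(complex \<Rightarrow> complex) \<Rightarrow> complex set \<Rightarrow> bool" where
  "wandering_domain f U \<longleftrightarrow> fatou_component f U \<and>
     (\<forall>n m. n \<noteq> m \<longrightarrow>
        \<not> (\<exists>V. fatou_component f V \<and> (f ^^ n) ` U \<subseteq> V \<and> (f ^^ m) ` U \<subseteq> V))"

definition periodic_fatou_component :: "(complex \<Rightarrow> complex) \<Rightarrow> complex set \<Rightarrow> bool" where
  "periodic_fatou_component f U \<longleftrightarrow> fatou_component f U \<and> (\<exists>p>0. (f ^^ p) ` U \<subseteq> U)"

definition separation_property :: "(complex \<Rightarrow> complex) \<Rightarrow> bool" where
  "separation_property f \<longleftrightarrow>
     (\<forall>U V. periodic_fatou_component f U \<and> periodic_fatou_component f V \<and> U \<noteq> V \<longrightarrow>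
        (\<forall>x y. x \<in> closure U \<inter> closure V \<and> y \<in> closure U \<inter> closure V \<longrightarrow> x = y))"

end

theory Submission
  imports Defs
begin

lemma frontier_component_disj:
  fixes S :: "complex set"
  assumes "open S" "C \<in> components S"
  shows "frontier C \<inter> S = {}"
proof -
  obtain x where C: "C = connected_component_set S x" using assms(2) by (auto simp: components_def)
  have "frontier C \<subseteq> frontier S" using C frontier_of_connected_component_subset by blast
  moreover have "frontier S \<inter> S = {}" using assms(1)
    by (auto simp: frontier_def interior_open)
  ultimately show ?thesis by blast
qed

lemma clopen_in_component:
  fixes X A :: "complex set"
  assumes "open X" "connected X" "X \<noteq> {}" "X \<inter> A = {}" "frontier X \<subseteq> A"
  shows "X \<in> components (- A)"
proof -
  obtain x where x: "x \<in> X" using assms(3) by blast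
  define C where "C = connected_component_set (- A) x"
  have xA: "x \<in> - A" using x assms(4) by blast
  have XC: "X \<subseteq> C" unfolding C_def
    by (meson assms(2,4) connected_component_maximal disjoint_eq_subset_Compl x)
  have "connected C" unfolding C_def by simp
  moreover have "openin (top_of_set C) X" using XC assms(1)
    by (metis inf.absorb_iff2 openin_open_Int)
  moreover have "closedin (top_of_set C) X"
  proof -
    have "C \<inter> closure X \<subseteq> X"
    proof
      fix y assume "y \<in> C \<inter> closure X"
      moreover have "C \<subseteq> - A" unfolding C_def by (rule connected_component_subset)
      ultimately show "y \<in> X" using assms(5) closure_Un_frontier by blast
    qed
    then have "X = C \<inter> closure X" using XC closure_subset by blast
    then show ?thesis by (metis closed_closure closedin_closed_Int)
  qed
  ultimately have "X = C" using assms(3) by (meson connected_clopen)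
  then show ?thesis using xA C_def by (auto simp: components_def)
qed

lemma frontier_two_points:
  fixes V :: "complex set"
  assumes "open V" "bounded V" "V \<noteq> {}"
  shows "\<exists>x y. x \<in> frontier V \<and> y \<in> frontier V \<and> x \<noteq> y"
proof (rule ccontr)
  assume H: "\<not> ?thesis"
  have "V \<noteq> UNIV" using assms(2) by auto
  then have "frontier V \<noteq> {}" using assms(3) frontier_eq_empty by blast
  then obtain a where a: "frontier V = {a}" using H by blast
  have aV: "a \<notin> V" using a assms(1) by (metis frontier_def insertI1 interior_open DiffD2)
  have "connected (- {a})" by (simp add: connected_punctured_universe)
  moreover have "openin (top_of_set (- {a})) V" using aV assms(1)
    by (metis Compl_iff inf.absorb_iff2 openin_open_Int singletonD subsetI)
  moreover have "closedin (top_of_set (- {a})) V"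
  proof -
    have "V = - {a} \<inter> closure V" using a aV closure_Un_frontier closure_subset by auto
    then show ?thesis by (metis closed_closure closedin_closed_Int)
  qed
  ultimately have "V = - {a}" using assms(3) by (meson connected_clopen)
  then have "bounded (- {a} :: complex set)" using assms(2) by simp
  then show False using cobounded_imp_unbounded[of "- {a}"] by auto
qed

lemma filled_eq: "filled D = - outside (closure D)"
proof -
  have "\<Union>{C \<in> components (- closure D). \<not> bounded C} = outside (closure D)"
  proof
    show "\<Union>{C \<in> components (- closure D). \<not> bounded C} \<subseteq> outside (closure D)"
    proof
      fix x assume "x \<in> \<Union>{C \<in> components (- closure D). \<not> bounded C}"
      then obtain y where y: "y \<in> - closure D" "\<not> bounded (connected_component_set (- closure D) y)"
        "x \<in> connected_component_set (- closure D) y"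
        by (auto simp: components_def)
      then have "connected_component_set (- closure D) x = connected_component_set (- closure D) y"
        by (simp add: connected_component_eq)
      moreover have "x \<in> - closure D" using y(3) connected_component_in by fastforce
      ultimately show "x \<in> outside (closure D)" using y(2) by (simp add: outside_def)
    qed
    show "outside (closure D) \<subseteq> \<Union>{C \<in> components (- closure D). \<not> bounded C}"
    proof
      fix x assume "x \<in> outside (closure D)"
      then have x: "x \<in> - closure D" "\<not> bounded (connected_component_set (- closure D) x)"
        by (auto simp: outside_def)
      then have "connected_component_set (- closure D) x \<in> components (- closure D)"
        by (auto simp: components_def)
      moreover have "x \<in> connected_component_set (- closure D) x" using x(1) by simp
      ultimately show "x \<in> \<Union>{C \<in> components (- closure D). \<not> bounded C}" using x(2) by blast
    qed
  qed
  then show ?thesis unfolding filled_def by simp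
qed

lemma far_outside:
  fixes A :: "complex set"
  assumes R: "\<And>x. x \<in> A \<Longrightarrow> norm x \<le> R" and d: "0 < d" "d \<le> 1"
  shows "- ball 0 (R+2) \<subseteq> outside (\<Union>a\<in>A. ball a d)"
proof
  fix y :: complex assume y: "y \<in> - ball 0 (R+2)"
  let ?N = "\<Union>a\<in>A. ball a d"
  have sub: "- ball 0 (R+2) \<subseteq> - ?N"
  proof (rule subsetI)
    fix z :: complex assume z: "z \<in> - ball 0 (R+2)"
    show "z \<in> - ?N"
    proof (rule ComplI)
      assume "z \<in> ?N"
      then obtain a where "a \<in> A" "dist a z < d" by auto
      then have "norm z < R + 1" using R[of a] d norm_triangle_ineq2[of z a]
        by (simp add: dist_norm norm_minus_commute)
      then show False using z by (simp add: dist_norm)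
    qed
  qed
  have "connected (- ball (0::complex) (R+2))"
    by (rule connected_complement_bounded_convex) auto
  then have "- ball 0 (R+2) \<subseteq> connected_component_set (- ?N) y"
    using sub y by (meson connected_component_maximal)
  moreover have "\<not> bounded (- ball (0::complex) (R+2))"
    using cobounded_imp_unbounded by auto
  ultimately have "\<not> bounded (connected_component_set (- ?N) y)"
    using bounded_subset by blast
  then show "y \<in> outside ?N" using sub y by (auto simp: outside_def)
qed

lemma local_outside:
  fixes A :: "complex set"
  assumes R: "\<And>x. x \<in> A \<Longrightarrow> norm x \<le> R" and A: "closed A" and s: "s \<in> outside A"
  shows "\<exists>\<rho>>0. \<forall>y\<in>ball s \<rho>. \<forall>d. 0 < d \<and> d \<le> min \<rho> 1 \<longrightarrow> y \<in> outside (\<Union>a\<in>A. ball a d)"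
proof -
  let ?C = "connected_component_set (- A) s"
  have sA: "s \<in> - A" and ub: "\<not> bounded ?C" using s by (auto simp: outside_def)
  obtain t where tC: "t \<in> ?C" and tn: "R + 2 \<le> norm t"
    using ub unfolding bounded_iff by (meson linorder_not_le order_less_le)
  have "open (- A)" using A by auto
  then have "path_component (- A) s t"
    using tC open_path_connected_component by (metis mem_Collect_eq)
  then obtain g where g: "path g" "path_image g \<subseteq> - A" "pathstart g = s" "pathfinish g = t"
    unfolding path_component_def by blast
  obtain e where e: "e > 0" "\<forall>x\<in>path_image g. \<forall>y\<in>A. e \<le> dist x y"
    using separate_compact_closed[of "path_image g" A] g(1,2) A compact_path_image by blast
  show ?thesis
  proof (intro exI[of _ "e/2"] conjI ballI allI impI)
    show "e/2 > 0" using e by simp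
    fix y d assume y: "y \<in> ball s (e/2)" and d: "0 < d \<and> d \<le> min (e/2) 1"
    let ?N = "\<Union>a\<in>A. ball a d"
    let ?T = "closed_segment y s \<union> path_image g"
    have Tc: "connected ?T"
      using g(1,3) by (intro connected_Un) (auto simp: connected_path_image pathstart_in_path_image)
    have TN: "?T \<subseteq> - ?N"
    proof (rule subsetI)
      fix z assume z: "z \<in> ?T"
      show "z \<in> - ?N"
      proof (rule ComplI)
        assume "z \<in> ?N"
        then obtain a where a: "a \<in> A" "dist a z < d" by auto
        show False
        proof (cases "z \<in> path_image g")
          case True
          then have "e \<le> dist z a" using e a by blast
          then show False using a d by (simp add: dist_commute)
        next
          case False
          then have "z \<in> closed_segment y s" using z by blast
          then have "dist z s \<le> dist y s" by (metis dist_commute dist_in_closed_segment)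
          moreover have "e \<le> dist s a" using e a g(3) pathstart_in_path_image by blast
          moreover have "dist s a \<le> dist s z + dist z a" by (rule dist_triangle)
          ultimately show False using a d y by (simp add: dist_commute)
        qed
      qed
    qed
    have yt: "connected_component (- ?N) y t"
      unfolding connected_component_def
      using Tc TN g(4) pathfinish_in_path_image[of g] by blast
    have "t \<in> - ball 0 (R+2)" using tn by (auto simp: dist_norm)
    then have "t \<in> outside ?N"
      using far_outside[of A R d] R d by auto
    then show "y \<in> outside ?N"
      using yt by (auto simp: outside_def connected_component_eq dest: connected_component_in)
  qed
qed

lemma outside_closed_bounded:
  fixes N :: "complex set"
  assumes "bounded N" "x0 \<in> outside N"
  shows "outside N = connected_component_set (- N) x0"
proof
  have "connected (outside N)" using assms(1) by (simp add: connected_outside)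
  moreover have "outside N \<subseteq> - N" by (auto simp: outside_def)
  ultimately show "outside N \<subseteq> connected_component_set (- N) x0"
    using assms(2) by (meson connected_component_maximal)
  show "connected_component_set (- N) x0 \<subseteq> outside N"
  proof
    fix y assume y: "y \<in> connected_component_set (- N) x0"
    then have "connected_component_set (- N) y = connected_component_set (- N) x0"
      by (simp add: connected_component_eq)
    moreover have "y \<in> - N" using y connected_component_in by fastforce
    ultimately show "y \<in> outside N" using assms(2) by (simp add: outside_def)
  qed
qed

lemma sc_nbhd:
  fixes A Sg :: "complex set"
  assumes A: "compact A" "connected A" "A \<noteq> {}" and Sg: "closed Sg" "Sg \<inter> - outside A = {}"
  obtains O1 where "open O1" "simply_connected O1" "A \<subseteq> O1" "O1 \<inter> Sg = {}"
proof -
  obtain R where R: "\<And>x. x \<in> A \<Longrightarrow> norm x \<le> R"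
    using compact_imp_bounded[OF A(1)] unfolding bounded_iff by blast
  define Q where "Q = Sg \<inter> cball 0 (R+2)"
  have Qc: "compact Q" unfolding Q_def using Sg(1) by (simp add: compact_Int_closed closed_Int_compact)
  have QA: "Q \<subseteq> outside A" using Sg(2) unfolding Q_def by blast
  have clA: "closed A" using A(1) compact_imp_closed by blast
  have "\<forall>s\<in>Q. \<exists>\<rho>>0. \<forall>y\<in>ball s \<rho>. \<forall>d. 0 < d \<and> d \<le> min \<rho> 1 \<longrightarrow> y \<in> outside (\<Union>a\<in>A. ball a d)"
    using local_outside[OF R clA] QA by blast
  then obtain \<rho> where \<rho>0: "\<forall>s\<in>Q. \<rho> s > 0 \<and> (\<forall>y\<in>ball s (\<rho> s). \<forall>d. 0 < d \<and> d \<le> min (\<rho> s) 1 \<longrightarrow> y \<in> outside (\<Union>a\<in>A. ball a d))"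
    using bchoice[of Q "\<lambda>s \<rho>. \<rho> > 0 \<and> (\<forall>y\<in>ball s \<rho>. \<forall>d. 0 < d \<and> d \<le> min \<rho> 1 \<longrightarrow> y \<in> outside (\<Union>a\<in>A. ball a d))"] by blast
  have \<rho>: "\<And>s. s \<in> Q \<Longrightarrow> \<rho> s > 0"
    "\<And>s y d. s \<in> Q \<Longrightarrow> y \<in> ball s (\<rho> s) \<Longrightarrow> 0 < d \<Longrightarrow> d \<le> min (\<rho> s) 1 \<Longrightarrow> y \<in> outside (\<Union>a\<in>A. ball a d)"
    using \<rho>0 by blast+
  obtain C' where C': "C' \<subseteq> Q" "finite C'" "Q \<subseteq> (\<Union>c\<in>C'. ball c (\<rho> c))"
  proof -
    have cov: "Q \<subseteq> (\<Union>c\<in>Q. ball c (\<rho> c))" using \<rho>(1) by force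
    show ?thesis by (rule compactE_image[OF Qc _ cov]) (auto intro: that)
  qed
  define d where "d = Min (insert 1 (\<rho> ` C'))"
  have dpos: "d > 0" unfolding d_def using C' \<rho>(1) by (subst Min_gr_iff) auto
  have d1: "d \<le> 1" unfolding d_def using C' by simp
  have drho: "\<And>c. c \<in> C' \<Longrightarrow> d \<le> \<rho> c" unfolding d_def using C' by simp
  define N where "N = (\<Union>a\<in>A. ball a d)"
  have Nopen: "open N" unfolding N_def by auto
  have NB: "N \<subseteq> ball 0 (R+2)"
  proof
    fix z assume "z \<in> N"
    then obtain a where "a \<in> A" "dist a z < d" by (auto simp: N_def)
    then have "norm z < R + 2" using R[of a] d1 norm_triangle_ineq2[of z a]
      by (simp add: dist_norm norm_minus_commute)
    then show "z \<in> ball 0 (R+2)" by simp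
  qed
  have Nb: "bounded N" using NB bounded_subset bounded_ball by blast
  have AN: "A \<subseteq> N" unfolding N_def using dpos by force
  have SgN: "Sg \<subseteq> outside N"
  proof
    fix s assume s: "s \<in> Sg"
    show "s \<in> outside N"
    proof (cases "norm s \<le> R + 2")
      case True
      then have "s \<in> Q" using s by (simp add: Q_def)
      then obtain c where c: "c \<in> C'" "s \<in> ball c (\<rho> c)" using C' by blast
      show ?thesis unfolding N_def
        using \<rho>(2)[of c s d] c C'(1) dpos d1 drho[OF c(1)] by auto
    next
      case False
      then have "s \<in> - ball 0 (R+2)" by auto
      then show ?thesis unfolding N_def using far_outside[of A R d] R dpos d1 by auto
    qed
  qed
  define x0 :: complex where "x0 = of_real (R+2)"
  have x0: "x0 \<in> outside N"
  proof -
    have "x0 \<in> - ball 0 (R+2)" unfolding x0_def by auto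
    then show ?thesis unfolding N_def using far_outside[of A R d] R dpos d1 by auto
  qed
  define O2 where "O2 = - outside N"
  have O2open: "open O2" unfolding O2_def
    using outside_closed_bounded[OF Nb x0] closed_connected_component Nopen
    by (metis closed_Compl open_Compl)
  obtain a0 where a0: "a0 \<in> A" using A(3) by blast
  define O1 where "O1 = connected_component_set O2 a0"
  have O1open: "open O1" unfolding O1_def using O2open by (simp add: open_connected_component)
  have NO2: "N \<subseteq> O2" unfolding O2_def by (auto simp: outside_def)
  have AO1: "A \<subseteq> O1" unfolding O1_def using AN NO2 A(2) a0
    by (meson connected_component_maximal order_trans)
  have O1O2: "O1 \<subseteq> O2" unfolding O1_def by (rule connected_component_subset)
  have disj: "O1 \<inter> Sg = {}" using O1O2 SgN unfolding O2_def by blast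
  have "simply_connected O1"
    unfolding simply_connected_eq_unbounded_complement_components[OF O1open]
  proof (intro conjI ballI)
    show "connected O1" unfolding O1_def by simp
    fix C assume C: "C \<in> components (- O1)"
    show "\<not> bounded C"
    proof
      assume bC: "bounded C"
      have oc: "connected (outside N)" using Nb by (simp add: connected_outside)
      have oO1: "outside N \<subseteq> - O1" using O1O2 unfolding O2_def by blast
      have CO2: "C \<subseteq> O2"
      proof (rule ccontr)
        assume "\<not> C \<subseteq> O2"
        then have "C \<inter> outside N \<noteq> {}" unfolding O2_def by blast
        then have "outside N \<subseteq> C" using components_maximal[OF C oc oO1] by blast
        then show False using bC unbounded_outside[OF Nb] bounded_subset by blast
      qed
      have Copen: "open C"
        unfolding open_subopen[of C]
      proof (rule ballI)
        fix x assume xC: "x \<in> C"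
        let ?D = "connected_component_set O2 x"
        have xD: "x \<in> ?D" using xC CO2 by auto
        have xO1: "x \<notin> O1" using xC C in_components_subset by blast
        have DO1: "?D \<subseteq> - O1"
        proof
          fix y assume y: "y \<in> ?D"
          show "y \<in> - O1"
          proof
            assume "y \<in> O1"
            then have "connected_component O2 a0 y" unfolding O1_def by simp
            moreover have "connected_component O2 y x" using y connected_component_sym by fastforce
            ultimately have "connected_component O2 a0 x" using connected_component_trans by blast
            then show False using xO1 unfolding O1_def by simp
          qed
        qed
        have "?D \<subseteq> C" using components_maximal[OF C _ DO1] xD xC by blast
        moreover have "open ?D" using O2open by (simp add: open_connected_component)
        ultimately show "\<exists>T. open T \<and> x \<in> T \<and> T \<subseteq> C" using xD by blast
      qed
      have Cclosed: "closed C" using closed_components[OF _ C] O1open by auto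
      have "C \<noteq> {}" using C in_components_nonempty by blast
      moreover have "C \<noteq> UNIV" using bC by auto
      ultimately show False using Copen Cclosed clopen by blast
    qed
  qed
  then show ?thesis using that O1open AO1 disj by blast
qed

lemma open_comp:
  fixes S :: "'a::real_normed_vector set"
  shows "open S \<Longrightarrow> C \<in> components S \<Longrightarrow> open C"
  by (auto simp: components_def open_connected_component)

lemma nonsingular_nbhd:
  assumes "s \<notin> singular_values f"
  obtains V where "open V" "s \<in> V" "\<And>W. W \<in> components (f -` V) \<Longrightarrow> inj_on f W \<and> f ` W = V"
  using assms unfolding singular_values_def by blast

lemma closed_singular_values: "closed (singular_values f)"
proof -
  have "open (- singular_values f)"
    unfolding open_subopen[of "- singular_values f"]
  proof (rule ballI)
    fix s assume "s \<in> - singular_values f"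
    then obtain V where V: "open V" "s \<in> V" "\<And>W. W \<in> components (f -` V) \<Longrightarrow> inj_on f W \<and> f ` W = V"
      using nonsingular_nbhd by blast
    have "V \<subseteq> - singular_values f"
      using V unfolding singular_values_def by blast
    then show "\<exists>T. open T \<and> s \<in> T \<and> T \<subseteq> - singular_values f" using V by blast
  qed
  then show ?thesis using closed_open by blast
qed

lemma entire_dense_range:
  fixes f :: "complex \<Rightarrow> complex"
  assumes hol: "f holomorphic_on UNIV" and nc: "\<not> f constant_on UNIV"
    and V: "open V" "s \<in> V"
  shows "f -` V \<noteq> {}"
proof (rule notI)
  assume emp: "f -` V = {}"
  obtain r where r: "r > 0" "ball s r \<subseteq> V" using V open_contains_ball by blast
  have far: "r \<le> norm (f z - s)" for z
  proof (rule ccontr)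
    assume "\<not> r \<le> norm (f z - s)"
    then have "f z \<in> ball s r" by (simp add: dist_norm norm_minus_commute)
    then show False using r emp by blast
  qed
  have ne: "f z - s \<noteq> 0" for z using far[of z] r by auto
  define g where "g z = 1 / (f z - s)" for z
  have gh: "g holomorphic_on UNIV" unfolding g_def using hol ne
    by (intro holomorphic_intros) auto
  have "norm (g z) \<le> 1 / r" for z
    unfolding g_def using far[of z] r by (simp add: norm_divide divide_simps)
  then have "bounded (range g)" by (auto simp: bounded_iff)
  then have "g constant_on UNIV" using Liouville_theorem gh by blast
  then obtain c where c: "\<And>z. g z = c" by (auto simp: constant_on_def)
  have "f z = s + 1 / c" for z
  proof -
    have "1 / c = f z - s" using c[of z] unfolding g_def by (metis divide_divide_eq_right div_by_1 mult_1)
    then show ?thesis by simp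
  qed
  then have "f constant_on UNIV" by (auto simp: constant_on_def)
  then show False using nc by blast
qed

lemma covering_from_nonsingular:
  fixes f :: "complex \<Rightarrow> complex"
  assumes hol: "f holomorphic_on UNIV" and nc: "\<not> f constant_on UNIV"
    and O1: "open O1" "O1 \<inter> singular_values f = {}"
  shows "covering_space (f -` O1) f O1"
proof
  have contf: "continuous_on UNIV f" using hol holomorphic_on_imp_continuous_on by blast
  show "continuous_on (f -` O1) f" using contf continuous_on_subset by blast
  show "f ` (f -` O1) = O1"
  proof
    show "f ` (f -` O1) \<subseteq> O1" by auto
    show "O1 \<subseteq> f ` (f -` O1)"
    proof
      fix s assume s: "s \<in> O1"
      then have "s \<notin> singular_values f" using O1 by blast
      then obtain V where V: "open V" "s \<in> V" "\<And>W. W \<in> components (f -` V) \<Longrightarrow> inj_on f W \<and> f ` W = V"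
        using nonsingular_nbhd by blast
      obtain z where "z \<in> f -` V" using entire_dense_range[OF hol nc V(1,2)] by blast
      then have "connected_component_set (f -` V) z \<in> components (f -` V)"
        by (auto simp: components_def)
      then have "s \<in> f ` (connected_component_set (f -` V) z)" using V by blast
      then obtain w where "f w = s" by blast
      then show "s \<in> f ` (f -` O1)" using s by blast
    qed
  qed
  fix s assume s: "s \<in> O1"
  then have "s \<notin> singular_values f" using O1 by blast
  then obtain V where V: "open V" "s \<in> V" "\<And>W. W \<in> components (f -` V) \<Longrightarrow> inj_on f W \<and> f ` W = V"
    using nonsingular_nbhd by blast
  define T where "T = V \<inter> O1"
  have Topen: "open T" unfolding T_def using V O1 by auto
  have fVopen: "open (f -` V)" using V(1) contf by (simp add: open_vimage)
  have fTopen: "open (f -` T)" using Topen contf by (simp add: open_vimage)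
  define v where "v = (\<lambda>W. W \<inter> f -` T) ` components (f -` V)"
  show "\<exists>T. s \<in> T \<and> openin (top_of_set O1) T \<and>
          (\<exists>v. \<Union>v = f -` O1 \<inter> f -` T \<and> (\<forall>u\<in>v. openin (top_of_set (f -` O1)) u) \<and>
               pairwise disjnt v \<and> (\<forall>u\<in>v. \<exists>q. homeomorphism u T f q))"
  proof (intro exI conjI)
    show "s \<in> T" using s V unfolding T_def by blast
    show "openin (top_of_set O1) T" using Topen unfolding T_def by (auto intro: open_subset)
    show "\<Union>v = f -` O1 \<inter> f -` T"
    proof -
      have "\<Union>v = (\<Union>(components (f -` V))) \<inter> f -` T" unfolding v_def by auto
      also have "\<dots> = f -` O1 \<inter> f -` T" unfolding T_def by auto
      finally show ?thesis .
    qed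
    show "\<forall>u\<in>v. openin (top_of_set (f -` O1)) u"
    proof
      fix u assume "u \<in> v"
      then obtain W where W: "W \<in> components (f -` V)" "u = W \<inter> f -` T" unfolding v_def by blast
      have "open u" using W open_comp[OF fVopen W(1)] fTopen by auto
      moreover have "u \<subseteq> f -` O1" using W unfolding T_def by auto
      ultimately show "openin (top_of_set (f -` O1)) u" by (simp add: open_subset)
    qed
    show "pairwise disjnt v"
    proof (unfold pairwise_def, intro ballI impI)
      fix u1 u2 assume u: "u1 \<in> v" "u2 \<in> v" "u1 \<noteq> u2"
      then obtain W1 W2 where W: "W1 \<in> components (f -` V)" "u1 = W1 \<inter> f -` T"
        "W2 \<in> components (f -` V)" "u2 = W2 \<inter> f -` T" unfolding v_def by blast
      then have "W1 \<noteq> W2" using u(3) by blast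
      then have "W1 \<inter> W2 = {}" using components_nonoverlap[OF W(1,3)] by blast
      then show "disjnt u1 u2" using W(2,4) by (auto simp: disjnt_def)
    qed
    show "\<forall>u\<in>v. \<exists>q. homeomorphism u T f q"
    proof
      fix u assume "u \<in> v"
      then obtain W where W: "W \<in> components (f -` V)" "u = W \<inter> f -` T" unfolding v_def by blast
      have injW: "inj_on f W" and imW: "f ` W = V" using V(3)[OF W(1)] by auto
      have uopen: "open u" using W open_comp[OF fVopen W(1)] fTopen by auto
      obtain q where "homeomorphism u T f q"
      proof (rule homeomorphism_injective_open_map)
        show "continuous_on u f" using contf continuous_on_subset by blast
        show "f ` u = T"
        proof
          show "f ` u \<subseteq> T" using W by auto
          show "T \<subseteq> f ` u"
          proof
            fix y assume y: "y \<in> T"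
            then have "y \<in> f ` W" using imW unfolding T_def by blast
            then obtain x where "x \<in> W" "f x = y" by blast
            then show "y \<in> f ` u" using W y by blast
          qed
        qed
        show "inj_on f u" using injW W(2) inj_on_subset by blast
        fix U assume U: "openin (top_of_set u) U"
        have "open U" using U uopen openin_open_trans by blast
        then have "open (f ` U)" using open_mapping_thm[OF hol open_UNIV connected_UNIV _ _ nc] by blast
        moreover have "f ` U \<subseteq> T" using openin_imp_subset[OF U] W by auto
        ultimately show "openin (top_of_set T) (f ` U)" by (simp add: open_subset)
      qed
      then show "\<exists>q. homeomorphism u T f q" by blast
    qed
  qed
qed

lemma inj_on_preimage_component:
  fixes f :: "complex \<Rightarrow> complex"
  assumes hol: "f holomorphic_on UNIV" and nc: "\<not> f constant_on UNIV"
    and O1: "open O1" "simply_connected O1" "O1 \<inter> singular_values f = {}"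
    and pq: "connected_component (f -` O1) p q" "f p = f q"
  shows "p = q"
proof -
  have contf: "continuous_on UNIV f" using hol holomorphic_on_imp_continuous_on by blast
  let ?G = "f -` O1"
  have Gopen: "open ?G" using O1(1) contf by (simp add: open_vimage)
  have cov: "covering_space ?G f O1" using covering_from_nonsingular[OF hol nc O1(1,3)] .
  have "path_component ?G p q" using pq(1) open_path_connected_component[OF Gopen] by simp
  then obtain a where a: "path a" "path_image a \<subseteq> ?G" "pathstart a = p" "pathfinish a = q"
    unfolding path_component_def by blast
  let ?g1 = "f \<circ> a"
  have g1: "path ?g1" using a(1) contf by (auto intro: path_continuous_image continuous_on_subset)
  have g1im: "path_image ?g1 \<subseteq> O1" using a(2) by (auto simp: path_image_compose)
  have loop: "pathfinish ?g1 = pathstart ?g1" using a pq(2) by (simp add: pathfinish_compose pathstart_compose)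
  have hom: "homotopic_paths O1 ?g1 (linepath (pathstart ?g1) (pathstart ?g1))"
    using O1(2) g1 g1im loop by (simp add: simply_connected_eq_contractible_path)
  have ps: "pathstart ?g1 = f p" using a(3) by (simp add: pathstart_compose)
  have pG: "p \<in> ?G" using a(2,3) pathstart_in_path_image by blast
  have "pathfinish a = pathfinish (linepath p p)"
  proof (rule covering_space_monodromy[OF cov g1 g1im _ _ hom a(1) a(2)])
    show "path (linepath (pathstart ?g1) (pathstart ?g1))" by simp
    show "path_image (linepath (pathstart ?g1) (pathstart ?g1)) \<subseteq> O1"
      using ps pG by simp
    show "\<And>t. t \<in> {0..1} \<Longrightarrow> f (a t) = ?g1 t" by simp
    show "path (linepath p p)" by simp
    show "path_image (linepath p p) \<subseteq> ?G" using pG by simp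
    show "\<And>t. t \<in> {0..1} \<Longrightarrow> f (linepath p p t) = linepath (pathstart ?g1) (pathstart ?g1) t"
      using ps by (simp add: linepath_refl)
    show "pathstart a = pathstart (linepath p p)" using a(3) by simp
  qed
  then show ?thesis using a(4) by simp
qed

lemma iterates_holomorphic:
  fixes f :: "complex \<Rightarrow> complex"
  assumes "f holomorphic_on UNIV"
  shows "(f ^^ n) holomorphic_on UNIV"
proof (induction n)
  case 0
  then show ?case by (simp add: id_def)
next
  case (Suc n)
  then show ?case using assms
    using holomorphic_on_compose_gen[of "f ^^ n" UNIV f UNIV] by (simp add: o_def)
qed

lemma bounded_iterates_fatou:
  fixes f :: "complex \<Rightarrow> complex"
  assumes hol: "f holomorphic_on UNIV" and X: "open X"
    and B: "\<And>n z. z \<in> X \<Longrightarrow> norm ((f ^^ n) z) \<le> B"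
  shows "X \<subseteq> fatou_set f"
proof
  fix z assume z: "z \<in> X"
  have "normal_family (range (\<lambda>n. f ^^ n)) X"
    unfolding normal_family_def
  proof (intro allI impI)
    fix g :: "nat \<Rightarrow> complex \<Rightarrow> complex"
    assume g: "\<forall>n. g n \<in> range (\<lambda>n. f ^^ n)"
    obtain h r where r: "strict_mono r"
      "\<And>K. \<lbrakk>compact K; K \<subseteq> X\<rbrakk> \<Longrightarrow> uniform_limit K (g \<circ> r) h sequentially"
    proof (rule Montel[OF X, of "range (\<lambda>n. f ^^ n)" g])
      show "\<And>h. h \<in> range (\<lambda>n. f ^^ n) \<Longrightarrow> h holomorphic_on X"
        using iterates_holomorphic[OF hol] holomorphic_on_subset by blast
      show "\<And>K. \<lbrakk>compact K; K \<subseteq> X\<rbrakk> \<Longrightarrow> \<exists>B. \<forall>h \<in> range (\<lambda>n. f ^^ n). \<forall>z\<in>K. norm (h z) \<le> B"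
        using B by blast
      show "range g \<subseteq> range (\<lambda>n. f ^^ n)" using g by blast
    qed blast
    then show "\<exists>r. strict_mono r \<and>
           ((\<exists>h. \<forall>K. compact K \<and> K \<subseteq> X \<longrightarrow> uniform_limit K (\<lambda>n. g (r n)) h sequentially) \<or>
            (\<forall>K. compact K \<and> K \<subseteq> X \<longrightarrow>
                 (\<forall>B. eventually (\<lambda>n. \<forall>z\<in>K. B \<le> norm (g (r n) z)) sequentially)))"
      using r unfolding o_def by blast
  qed
  then show "z \<in> fatou_set f" using z X unfolding fatou_set_def by blast
qed

lemma open_fatou: "open (fatou_set f)"
  unfolding open_subopen[of "fatou_set f"]
proof (rule ballI)
  fix z assume "z \<in> fatou_set f"
  then obtain U where U: "open U" "z \<in> U" "normal_family (range (\<lambda>n. f ^^ n)) U"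
    unfolding fatou_set_def by blast
  then have "U \<subseteq> fatou_set f" unfolding fatou_set_def by blast
  then show "\<exists>T. open T \<and> z \<in> T \<and> T \<subseteq> fatou_set f" using U by blast
qed

theorem propositionA:
  fixes f :: "complex \<Rightarrow> complex" and \<Delta> :: "complex set" and \<theta> :: real
  assumes "transcendental_entire f"
    and "invariant_siegel_disk f \<Delta> \<theta>"
    and "bounded \<Delta>"
    and "singular_values f \<inter> filled \<Delta> = {}"
    and "separation_property f"
    and "\<not> (\<exists>U. wandering_domain f U)"
  shows "hidden_components \<Delta> = {}"
proof (rule ccontr)
  assume "hidden_components \<Delta> \<noteq> {}"
  then obtain U where Ucomp: "U \<in> components (- closure \<Delta>)" and Ubdd: "bounded U"
    unfolding hidden_components_def by blast
  define F where "F = fatou_set f"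
  define A where "A = closure \<Delta>"
  have hol: "f holomorphic_on UNIV" using assms(1) unfolding transcendental_entire_def by blast
  have nc: "\<not> f constant_on UNIV"
  proof
    assume "f constant_on UNIV"
    then obtain c where "\<And>z. f z = c" by (auto simp: constant_on_def)
    then have "\<forall>z. f z = poly [:c:] z" by simp
    then show False using assms(1) unfolding transcendental_entire_def by blast
  qed
  have contf: "continuous_on UNIV f" using hol holomorphic_on_imp_continuous_on by blast
  have Dcomp: "\<Delta> \<in> components F" and fD: "f ` \<Delta> = \<Delta>"
    using assms(2) unfolding invariant_siegel_disk_def fatou_component_def F_def by blast+
  obtain \<phi> :: "complex \<Rightarrow> complex" where \<phi>: "\<phi> ` \<Delta> = ball 0 1"
    using assms(2) unfolding invariant_siegel_disk_def by blast
  obtain z1 z2 where z12: "z1 \<in> \<Delta>" "z2 \<in> \<Delta>" "z1 \<noteq> z2"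
  proof -
    have "0 \<in> \<phi> ` \<Delta>" "1/2 \<in> \<phi> ` \<Delta>" using \<phi> by auto
    then obtain z1 z2 where "z1 \<in> \<Delta>" "\<phi> z1 = 0" "z2 \<in> \<Delta>" "\<phi> z2 = 1/2" by force
    then show ?thesis using that by force
  qed
  have Fopen: "open F" unfolding F_def by (rule open_fatou)
  have Dconn: "connected \<Delta>" using Dcomp in_components_connected by blast
  have Aconn: "connected A" unfolding A_def using Dconn connected_imp_connected_closure by blast
  have Acomp: "compact A" unfolding A_def using assms(3) by (simp add: compact_closure)
  have Ane: "A \<noteq> {}" unfolding A_def using z12 closure_subset by blast
  have DA: "\<Delta> \<subseteq> A" unfolding A_def by (rule closure_subset)
  have iterD: "(f ^^ n) ` \<Delta> = \<Delta>" for n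
  proof (induction n)
    case 0 then show ?case by simp
  next
    case (Suc n)
    have "(f ^^ Suc n) ` \<Delta> = f ` ((f ^^ n) ` \<Delta>)" by (simp add: image_image)
    then show ?case using fD Suc by simp
  qed
  have contn: "continuous_on UNIV (f ^^ n)" for n
    using iterates_holomorphic[OF hol] holomorphic_on_imp_continuous_on by blast
  have iterA: "(f ^^ n) ` A \<subseteq> A" for n
    unfolding A_def
  proof (rule image_closure_subset)
    show "continuous_on (closure \<Delta>) (f ^^ n)" using contn[of n] continuous_on_subset by blast
    show "(f ^^ n) ` \<Delta> \<subseteq> closure \<Delta>" using iterD[of n] closure_subset by blast
  qed simp
  have fA: "f ` A \<subseteq> A" using iterA[of 1] by simp
  have ncn: "\<not> (f ^^ n) constant_on UNIV" for n
  proof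
    assume "(f ^^ n) constant_on UNIV"
    then obtain c where c: "\<And>z. (f ^^ n) z = c" by (auto simp: constant_on_def)
    have "\<Delta> \<subseteq> {c}" using iterD[of n] c by auto
    then show False using z12 by blast
  qed
  obtain R where R: "\<And>x. x \<in> A \<Longrightarrow> norm x \<le> R"
    using compact_imp_bounded[OF Acomp] unfolding bounded_iff by blast
  have FD: "frontier \<Delta> \<inter> F = {}" using frontier_component_disj[OF Fopen Dcomp] .
  have AD: "A = \<Delta> \<union> frontier \<Delta>" unfolding A_def by (simp add: closure_Un_frontier)
  have compF: "X \<subseteq> \<Delta>" if c1: "connected X" and c2: "X \<subseteq> F" and c3: "X \<inter> A \<noteq> {}" for X
  proof -
    obtain y where y: "y \<in> X" "y \<in> A" using c3 by blast
    then have "y \<in> \<Delta>" using FD AD c2 by blast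
    then show ?thesis using components_maximal[OF Dcomp c1 c2] y by blast
  qed
  have clA: "closed A" unfolding A_def by simp
  have Uopen: "open U" using open_comp[OF _ Ucomp] clA unfolding A_def by auto
  have Uconn: "connected U" using Ucomp in_components_connected by blast
  have Une: "U \<noteq> {}" using Ucomp in_components_nonempty by blast
  have UA: "U \<inter> A = {}" using Ucomp in_components_subset unfolding A_def by blast
  have frU: "frontier U \<subseteq> A"
    using frontier_component_disj[OF _ Ucomp] clA unfolding A_def by auto
  define X where "X k = (f ^^ k) ` U" for k
  have X0: "X 0 = U" unfolding X_def by simp
  have Xopen: "open (X k)" for k
    unfolding X_def using open_mapping_thm[OF iterates_holomorphic[OF hol] open_UNIV connected_UNIV Uopen subset_UNIV ncn] .
  have Xconn: "connected (X k)" for k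
    unfolding X_def using connected_continuous_image[OF continuous_on_subset[OF contn] Uconn] by blast
  have Xne: "X k \<noteq> {}" for k unfolding X_def using Une by blast
  have bndU: "norm ((f ^^ m) u) \<le> R" if uU: "u \<in> U" for m u
  proof (rule maximum_modulus_frontier[of "f ^^ m" U])
    show "(f ^^ m) holomorphic_on interior U"
      using iterates_holomorphic[OF hol] holomorphic_on_subset by blast
    show "continuous_on (closure U) (f ^^ m)" using contn continuous_on_subset by blast
    show "bounded U" by (rule Ubdd)
    show "\<And>z. z \<in> frontier U \<Longrightarrow> norm ((f ^^ m) z) \<le> R" using frU iterA R by blast
    show "u \<in> U" by (rule uU)
  qed
  have bndX: "norm ((f ^^ n) z) \<le> R" if zX: "z \<in> X k" for n k z
  proof -
    obtain u where u: "u \<in> U" "z = (f ^^ k) u" using zX unfolding X_def by blast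
    have "(f ^^ n) z = (f ^^ (n + k)) u" using u by (simp add: funpow_add)
    then show ?thesis using bndU[OF u(1)] by simp
  qed
  have XF: "X k \<subseteq> F" for k
    unfolding F_def using bounded_iterates_fatou[OF hol Xopen bndX] .
  have Xbdd: "bounded (X k)" for k
    using bndX[of _ k 0] unfolding bounded_iff by auto
  have frX: "frontier (X k) \<subseteq> A" for k
  proof
    fix x assume x: "x \<in> frontier (X k)"
    have cU: "compact (closure U)" using Ubdd by (simp add: compact_closure)
    have "compact ((f ^^ k) ` closure U)"
      using compact_continuous_image[OF continuous_on_subset[OF contn] cU] by blast
    then have "closure (X k) \<subseteq> (f ^^ k) ` closure U"
      unfolding X_def by (intro closure_minimal) (auto intro: compact_imp_closed dest: closure_subset[THEN subsetD])
    moreover have "x \<in> closure (X k)" "x \<notin> X k"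
      using x Xopen[of k] by (auto simp: frontier_def interior_open)
    ultimately obtain y where y: "y \<in> closure U" "x = (f ^^ k) y" by blast
    have "y \<notin> U" using y \<open>x \<notin> X k\<close> unfolding X_def by blast
    then have "y \<in> frontier U" using y Uopen by (simp add: frontier_def interior_open)
    then show "x \<in> A" using y frU iterA by blast
  qed
  show False
  proof (cases "\<forall>k. X k \<inter> A = {}")
    case True
    have XcompA: "X k \<in> components (- A)" for k
      using clopen_in_component[OF Xopen Xconn Xne] True frX by blast
    have XcompF: "X k \<in> components F" for k
    proof -
      obtain x where x: "x \<in> X k" using Xne by blast
      define D where "D = connected_component_set F x"
      have xF: "x \<in> F" using x XF by blast
      have Dc: "D \<in> components F" unfolding D_def using xF by (auto simp: components_def)
      have XD: "X k \<subseteq> D" unfolding D_def using x Xconn[of k] XF[of k] by (meson connected_component_maximal)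
      have DF: "D \<subseteq> F" unfolding D_def by (rule connected_component_subset)
      have "D \<inter> \<Delta> = {}"
      proof (rule ccontr)
        assume "D \<inter> \<Delta> \<noteq> {}"
        then have "D = \<Delta>" using components_eq[OF Dc Dcomp] by blast
        then show False using x XD DA True by blast
      qed
      then have "D \<subseteq> - A" using AD DF FD by blast
      moreover have "connected D" unfolding D_def by simp
      moreover have "X k \<inter> D \<noteq> {}" using XD Xne by blast
      ultimately have "D \<subseteq> X k" using components_maximal[OF XcompA[of k]] by blast
      then show ?thesis using XD Dc by auto
    qed
    have Ufc: "fatou_component f U" using XcompF[of 0] X0 unfolding fatou_component_def F_def by simp
    obtain n m V where nm: "n \<noteq> m" "fatou_component f V" "X n \<subseteq> V" "X m \<subseteq> V"
      using assms(6) Ufc unfolding wandering_domain_def X_def by blast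
    have VF: "V \<in> components F" using nm(2) unfolding fatou_component_def F_def .
    have "X n = V" using components_eq[OF XcompF VF] nm(3) Xne by blast
    moreover have "X m = V" using components_eq[OF XcompF VF] nm(4) Xne by blast
    ultimately have Xnm: "X n = X m" by simp
    define a where "a = min n m"
    define b where "b = max n m"
    have ab: "a < b" "X a = X b" using nm(1) Xnm unfolding a_def b_def by (auto simp: min_def max_def)
    define p where "p = b - a"
    have pp: "p > 0" using ab unfolding p_def by simp
    have "(f ^^ p) ` X a = X b"
      unfolding X_def p_def using ab by (simp add: image_comp funpow_add[symmetric])
    then have per: "periodic_fatou_component f (X a)"
      using pp ab XcompF[of a] unfolding periodic_fatou_component_def fatou_component_def F_def by auto
    have perD: "periodic_fatou_component f \<Delta>"
      unfolding periodic_fatou_component_def fatou_component_def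
      using Dcomp fD unfolding F_def by (intro conjI exI[of _ 1]) auto
    have ne: "X a \<noteq> \<Delta>" using True z12 DA by blast
    obtain x y where xy: "x \<in> frontier (X a)" "y \<in> frontier (X a)" "x \<noteq> y"
      using frontier_two_points[OF Xopen Xbdd Xne] by blast
    have "x \<in> closure (X a) \<inter> closure \<Delta>" "y \<in> closure (X a) \<inter> closure \<Delta>"
      using xy frX frontier_def unfolding A_def by auto
    then show False using assms(5) per perD ne xy(3) unfolding separation_property_def by blast
  next
    case False
    then have ex: "\<exists>k. X k \<inter> A \<noteq> {}" by blast
    define k0 where "k0 = (LEAST k. X k \<inter> A \<noteq> {})"
    have k0: "X k0 \<inter> A \<noteq> {}" unfolding k0_def using LeastI_ex[OF ex] .
    have "k0 \<noteq> 0" using k0 X0 UA by auto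
    then obtain j where j: "k0 = Suc j" using not0_implies_Suc by blast
    have XjA: "X j \<inter> A = {}" using not_less_Least[of j "\<lambda>k. X k \<inter> A \<noteq> {}"] j unfolding k0_def by auto
    have fXj: "f ` X j = X k0" unfolding X_def j by (simp add: image_comp)
    have XkD: "X k0 \<subseteq> \<Delta>" using compF[OF Xconn XF k0] .
    have Sg: "singular_values f \<inter> - outside A = {}"
      using assms(4) filled_eq unfolding A_def by metis
    obtain O1 where O1: "open O1" "simply_connected O1" "A \<subseteq> O1" "O1 \<inter> singular_values f = {}"
      using sc_nbhd[OF Acomp Aconn Ane closed_singular_values Sg] by blast
    obtain x where x: "x \<in> X j" using Xne by blast
    have "f x \<in> \<Delta>" using x fXj XkD by blast
    then obtain q where q: "q \<in> \<Delta>" "f q = f x" using fD by (metis imageE)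
    define Y where "Y = closure (X j) \<union> A"
    have frne: "frontier (X j) \<noteq> {}"
      using Xne[of j] Xbdd[of j] frontier_eq_empty by (metis not_bounded_UNIV)
    have "closure (X j) \<inter> A \<noteq> {}" using frne frX[of j] frontier_def by blast
    then have Yconn: "connected Y" unfolding Y_def
      using connected_Un connected_imp_connected_closure Xconn Aconn by blast
    have clXj: "closure (X j) \<subseteq> X j \<union> A" using frX[of j] closure_Un_frontier by blast
    have "Y \<subseteq> f -` O1" unfolding Y_def using clXj fXj XkD DA fA O1(3) by blast
    moreover have "x \<in> Y" "q \<in> Y" unfolding Y_def using x q DA closure_subset by blast+
    ultimately have "connected_component (f -` O1) x q"
      unfolding connected_component_def using Yconn by blast
    then have "x = q" using inj_on_preimage_component[OF hol nc O1(1,2,4)] q(2) by metis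
    then show False using x q XjA DA by blast
  qed
qed

end
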